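(* Let $G$ be a $\lambda$-graph and $Q$ a query over $G$. Then $Q^{\#}$ is a sharing equivalence if and only if there exists a sharing equivalence on the nodes of $G$ containing $Q$.
   Context: A pre-$\lambda$-graph is a directed graph whose nodes are of four kinds: an application node $@(n_1,n_2)$ has exactly two children, its left child $n_1$ and its right child $n_2$; an abstraction node $\lambda(n)$ has exactly one child, its body $n$; a free variable node has no children and carries an atom $\mathrm{id}(n)$ from a fixed set of atoms, distinct free variable nodes carrying distinct atoms; a bound variable node $\mathrm{var}(l)$ has exactly one outgoing binding edge, to an abstraction node $l$ (its binder). A trace is a finite sequence of directions from $\{\swarrow,\downarrow,\searrow\}$; $\epsilon$ is the empty trace and $d\cdot\tau$ is the trace $\tau$ extended by one final step $d$. Paths $n\xrightarrow{\tau}m$ are defined inductively: $n\xrightarrow{\epsilon}n$; if $n\xrightarrow{\tau}\lambda(m)$ then $n\xrightarrow{\downarrow\cdot\tau}m$; if $n\xrightarrow{\tau}@(m_1,m_2)$ then $n\xrightarrow{\swarrow\cdot\tau}m_1$ and $n\xrightarrow{\searrow\cdot\tau}m_2$ (binding edges are never followed). The path $n\xrightarrow{\tau}$ crosses a node $m$ if either $n\xrightarrow{\tau}m$, or $\tau=d\cdot\tau'$ and $n\xrightarrow{\tau'}$ crosses $m$. A root is a node $r$ such that the only path ending in $r$ has the empty trace. A node $m$ dominates $n$ if every path from a root to $n$ crosses $m$. A $\lambda$-graph is a pre-$\lambda$-graph that has finitely many nodes, is acyclic ($n\xrightarrow{\tau}n$ holds only for $\tau=\epsilon$), and is dominated (every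 bound variable node $\mathrm{var}(l)$ is dominated by its binder $l$). Two nodes are homogeneous if both are application nodes, or both abstraction nodes, or both free variable nodes, or both bound variable nodes; a binary relation $R$ on nodes is homogeneous if it only relates homogeneous nodes. Rules: $(\swarrow)$: $@(n_1,n_2)\,R\,@(m_1,m_2)$ implies $n_1\,R\,m_1$; $(\searrow)$: $@(n_1,n_2)\,R\,@(m_1,m_2)$ implies $n_2\,R\,m_2$; $(\downarrow)$: $\lambda(n)\,R\,\lambda(m)$ implies $n\,R\,m$; $(\circlearrowright)$: $\mathrm{var}(n)\,R\,\mathrm{var}(m)$ implies $n\,R\,m$. $R$ is propagated if closed under $(\swarrow),(\downarrow),(\searrow)$. $R$ is open if $n\,R\,m$ implies $n=m$ for all free variable nodes $n,m$. A bisimulation is a homogeneous propagated relation closed also under $(\circlearrowright)$. A sharing equivalence is an open bisimulation that is an equivalence relation. $R^{\#}$ (spreading) is the smallest propagated equivalence relation containing $R$. A query over $G$ is a binary relation on the roots of $G$. *)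

theory Defs
  imports Main
begin

text \<open>Node labels: application with left and right child, abstraction with body,
  free variable carrying an atom, bound variable with its binding edge to a binder.\<close>
datatype ('n, 'a) node = App 'n 'n | Abs 'n | FVar 'a | BVar 'n

record ('n, 'a) pregraph =
  nodes :: "'n set"
  lab   :: "'n \<Rightarrow> ('n, 'a) node"

definition pre_lambda_graph :: "('n, 'a) pregraph \<Rightarrow> bool" where
  "pre_lambda_graph G \<longleftrightarrow>
     (\<forall>n\<in>nodes G. \<forall>n1 n2. lab G n = App n1 n2 \<longrightarrow> n1 \<in> nodes G \<and> n2 \<in> nodes G) \<and>
     (\<forall>n\<in>nodes G. \<forall>b. lab G n = Abs b \<longrightarrow> b \<in> nodes G) \<and>
     (\<forall>n\<in>nodes G. \<forall>l. lab G n = BVar l \<longrightarrow> l \<in> nodes G \<and> (\<exists>b. lab G l = Abs b)) \<and>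
     (\<forall>n\<in>nodes G. \<forall>m\<in>nodes G. \<forall>a. lab G n = FVar a \<and> lab G m = FVar a \<longrightarrow> n = m)"

datatype dir = DL | DD | DR  \<comment> \<open>left child, abstraction body, right child\<close>

text \<open>Traces are lists; the trace \<open>d \<cdot> \<tau>\<close> (\<open>\<tau>\<close> extended by a final step d) is \<open>d # \<tau>\<close>.\<close>
inductive path :: "('n, 'a) pregraph \<Rightarrow> 'n \<Rightarrow> dir list \<Rightarrow> 'n \<Rightarrow> bool" for G where
  path_nil: "n \<in> nodes G \<Longrightarrow> path G n [] n"
| path_abs: "path G n \<tau> l \<Longrightarrow> lab G l = Abs m \<Longrightarrow> path G n (DD # \<tau>) m"
| path_appl: "path G n \<tau> a \<Longrightarrow> lab G a = App m1 m2 \<Longrightarrow> path G n (DL # \<tau>) m1"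
| path_appr: "path G n \<tau> a \<Longrightarrow> lab G a = App m1 m2 \<Longrightarrow> path G n (DR # \<tau>) m2"

fun crosses :: "('n, 'a) pregraph \<Rightarrow> 'n \<Rightarrow> dir list \<Rightarrow> 'n \<Rightarrow> bool" where
  "crosses G n [] m = path G n [] m"
| "crosses G n (d # \<tau>) m = (path G n (d # \<tau>) m \<or> crosses G n \<tau> m)"

definition is_root :: "('n, 'a) pregraph \<Rightarrow> 'n \<Rightarrow> bool" where
  "is_root G r \<longleftrightarrow> r \<in> nodes G \<and> (\<forall>n \<tau>. path G n \<tau> r \<longrightarrow> \<tau> = [])"

definition dominates :: "('n, 'a) pregraph \<Rightarrow> 'n \<Rightarrow> 'n \<Rightarrow> bool" where
  "dominates G m n \<longleftrightarrow> (\<forall>r \<tau>. is_root G r \<and> path G r \<tau> n \<longrightarrow> crosses G r \<tau> m)"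

definition lambda_graph :: "('n, 'a) pregraph \<Rightarrow> bool" where
  "lambda_graph G \<longleftrightarrow> pre_lambda_graph G \<and> finite (nodes G) \<and>
     (\<forall>n \<tau>. path G n \<tau> n \<longrightarrow> \<tau> = []) \<and>
     (\<forall>n\<in>nodes G. \<forall>l. lab G n = BVar l \<longrightarrow> dominates G l n)"

fun homogeneous_nodes :: "('n, 'a) node \<Rightarrow> ('n, 'a) node \<Rightarrow> bool" where
  "homogeneous_nodes (App _ _) (App _ _) = True"
| "homogeneous_nodes (Abs _) (Abs _) = True"
| "homogeneous_nodes (FVar _) (FVar _) = True"
| "homogeneous_nodes (BVar _) (BVar _) = True"
| "homogeneous_nodes _ _ = False"

definition homogeneous :: "('n, 'a) pregraph \<Rightarrow> ('n \<times> 'n) set \<Rightarrow> bool" where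
  "homogeneous G R \<longleftrightarrow> (\<forall>(n, m)\<in>R. homogeneous_nodes (lab G n) (lab G m))"

definition propagated :: "('n, 'a) pregraph \<Rightarrow> ('n \<times> 'n) set \<Rightarrow> bool" where
  "propagated G R \<longleftrightarrow>
     (\<forall>n m n1 n2 m1 m2. (n, m) \<in> R \<and> lab G n = App n1 n2 \<and> lab G m = App m1 m2
        \<longrightarrow> (n1, m1) \<in> R \<and> (n2, m2) \<in> R) \<and>
     (\<forall>n m n' m'. (n, m) \<in> R \<and> lab G n = Abs n' \<and> lab G m = Abs m' \<longrightarrow> (n', m') \<in> R)"

definition closed_binders :: "('n, 'a) pregraph \<Rightarrow> ('n \<times> 'n) set \<Rightarrow> bool" where
  "closed_binders G R \<longleftrightarrow>
     (\<forall>n m l l'. (n, m) \<in> R \<and> lab G n = BVar l \<and> lab G m = BVar l' \<longrightarrow> (l, l') \<in> R)"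

definition open_rel :: "('n, 'a) pregraph \<Rightarrow> ('n \<times> 'n) set \<Rightarrow> bool" where
  "open_rel G R \<longleftrightarrow> (\<forall>n m a b. (n, m) \<in> R \<and> lab G n = FVar a \<and> lab G m = FVar b \<longrightarrow> n = m)"

definition bisimulation :: "('n, 'a) pregraph \<Rightarrow> ('n \<times> 'n) set \<Rightarrow> bool" where
  "bisimulation G R \<longleftrightarrow> homogeneous G R \<and> propagated G R \<and> closed_binders G R"

definition sharing_equivalence :: "('n, 'a) pregraph \<Rightarrow> ('n \<times> 'n) set \<Rightarrow> bool" where
  "sharing_equivalence G R \<longleftrightarrow> open_rel G R \<and> bisimulation G R \<and> equiv (nodes G) R"

inductive_set spread :: "('n, 'a) pregraph \<Rightarrow> ('n \<times> 'n) set \<Rightarrow> ('n \<times> 'n) set"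
  for G R where
  sp_base: "(n, m) \<in> R \<Longrightarrow> (n, m) \<in> spread G R"
| sp_refl: "n \<in> nodes G \<Longrightarrow> (n, n) \<in> spread G R"
| sp_sym: "(n, m) \<in> spread G R \<Longrightarrow> (m, n) \<in> spread G R"
| sp_trans: "(n, m) \<in> spread G R \<Longrightarrow> (m, k) \<in> spread G R \<Longrightarrow> (n, k) \<in> spread G R"
| sp_left: "(n, m) \<in> spread G R \<Longrightarrow> lab G n = App n1 n2 \<Longrightarrow> lab G m = App m1 m2
            \<Longrightarrow> (n1, m1) \<in> spread G R"
| sp_right: "(n, m) \<in> spread G R \<Longrightarrow> lab G n = App n1 n2 \<Longrightarrow> lab G m = App m1 m2
            \<Longrightarrow> (n2, m2) \<in> spread G R"
| sp_down: "(n, m) \<in> spread G R \<Longrightarrow> lab G n = Abs n' \<Longrightarrow> lab G m = Abs m'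
            \<Longrightarrow> (n', m') \<in> spread G R"

definition query :: "('n, 'a) pregraph \<Rightarrow> ('n \<times> 'n) set \<Rightarrow> bool" where
  "query G Q \<longleftrightarrow> (\<forall>(r, s)\<in>Q. is_root G r \<and> is_root G s)"

end

theory Submission
  imports Defs
begin


lemma pl_app: "pre_lambda_graph G \<Longrightarrow> n \<in> nodes G \<Longrightarrow> lab G n = App n1 n2 \<Longrightarrow> n1 \<in> nodes G \<and> n2 \<in> nodes G"
  unfolding pre_lambda_graph_def by blast
lemma pl_abs: "pre_lambda_graph G \<Longrightarrow> n \<in> nodes G \<Longrightarrow> lab G n = Abs b \<Longrightarrow> b \<in> nodes G"
  unfolding pre_lambda_graph_def by blast
lemma pl_bvar: "pre_lambda_graph G \<Longrightarrow> n \<in> nodes G \<Longrightarrow> lab G n = BVar l \<Longrightarrow> l \<in> nodes G"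
  unfolding pre_lambda_graph_def by blast

lemma path_nodes:
  assumes "pre_lambda_graph G" "path G x t y"
  shows "x \<in> nodes G \<and> y \<in> nodes G"
  using assms(2)
proof induction
  case (path_nil n) then show ?case by simp
next
  case (path_abs n \<tau> l m) then show ?case using pl_abs[OF assms(1)] by blast
next
  case (path_appl n \<tau> a m1 m2) then show ?case using pl_app[OF assms(1)] by blast
next
  case (path_appr n \<tau> a m1 m2) then show ?case using pl_app[OF assms(1)] by blast
qed

lemma path_det: "path G x t a \<Longrightarrow> path G x t b \<Longrightarrow> a = b"
proof (induction arbitrary: b rule: path.induct)
  case (path_nil n) from path_nil.prems show ?case by (cases rule: path.cases) auto
next
  case (path_abs n \<tau> l m) from path_abs.prems show ?case
    by (cases rule: path.cases) (use path_abs in auto)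
next
  case (path_appl n \<tau> a m1 m2) from path_appl.prems show ?case
    by (cases rule: path.cases) (use path_appl in auto)
next
  case (path_appr n \<tau> a m1 m2) from path_appr.prems show ?case
    by (cases rule: path.cases) (use path_appr in auto)
qed

lemma path_cat: "path G y r z \<Longrightarrow> path G x s y \<Longrightarrow> path G x (r @ s) z"
  by (induction rule: path.induct) (auto intro: path.intros)

lemma path_split: "pre_lambda_graph G \<Longrightarrow> path G x (r @ s) z \<Longrightarrow> \<exists>y. path G x s y \<and> path G y r z"
proof (induction r arbitrary: z)
  case Nil
  then show ?case using path.path_nil path_nodes by fastforce
next
  case (Cons d r)
  from Cons.prems(2) show ?case
  proof (cases rule: path.cases)
    case path_nil then show ?thesis by simp
  next
    case (path_abs t l) then show ?thesis using Cons.IH[of l] Cons.prems(1) by (auto intro: path.path_abs)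
  next
    case (path_appl t a m2) then show ?thesis using Cons.IH[of a] Cons.prems(1) by (auto intro: path.path_appl)
  next
    case (path_appr t a m1) then show ?thesis using Cons.IH[of a] Cons.prems(1) by (auto intro: path.path_appr)
  qed
qed



definition childrel :: "('n, 'a) pregraph \<Rightarrow> ('n \<times> 'n) set" where
  "childrel G = {(c,p). p \<in> nodes G \<and> ((\<exists>c2. lab G p = App c c2) \<or> (\<exists>c1. lab G p = App c1 c) \<or> lab G p = Abs c)}"

lemma path_nil_eq: "path G x [] y \<Longrightarrow> y = x"
  by (cases rule: path.cases) auto

lemma desc: assumes "pre_lambda_graph G" shows "path G x d y \<Longrightarrow> d \<noteq> [] \<Longrightarrow> (y,x) \<in> (childrel G)\<^sup>+"
proof (induction rule: path.induct)
  case (path_nil n) then show ?case by simp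
next
  case (path_abs n \<tau> l m)
  have l: "l \<in> nodes G" using path_nodes[OF assms path_abs.hyps(1)] by blast
  have c: "(m,l) \<in> childrel G" using l path_abs.hyps(2) by (simp add: childrel_def)
  show ?case
  proof (cases "\<tau> = []")
    case True then have "l = n" using path_abs.hyps(1) path_nil_eq by metis
    then show ?thesis using c by auto
  next
    case False then show ?thesis using c path_abs.IH by (meson trancl_into_trancl2)
  qed
next
  case (path_appl n \<tau> l m1 m2)
  have l: "l \<in> nodes G" using path_nodes[OF assms path_appl.hyps(1)] by blast
  have c: "(m1,l) \<in> childrel G" using l path_appl.hyps(2) by (simp add: childrel_def)
  show ?case
  proof (cases "\<tau> = []")
    case True then have "l = n" using path_appl.hyps(1) path_nil_eq by metis
    then show ?thesis using c by auto
  next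
    case False then show ?thesis using c path_appl.IH by (meson trancl_into_trancl2)
  qed
next
  case (path_appr n \<tau> l m1 m2)
  have l: "l \<in> nodes G" using path_nodes[OF assms path_appr.hyps(1)] by blast
  have c: "(m2,l) \<in> childrel G" using l path_appr.hyps(2) by (simp add: childrel_def)
  show ?case
  proof (cases "\<tau> = []")
    case True then have "l = n" using path_appr.hyps(1) path_nil_eq by metis
    then show ?thesis using c by auto
  next
    case False then show ?thesis using c path_appr.IH by (meson trancl_into_trancl2)
  qed
qed

lemma child_path: "(c,p) \<in> childrel G \<Longrightarrow> \<exists>e. path G p [e] c"
proof -
  assume a: "(c,p) \<in> childrel G"
  then have pn: "path G p [] p" unfolding childrel_def by (auto intro: path.path_nil)
  from a show ?thesis unfolding childrel_def
    using path.path_appl[OF pn] path.path_appr[OF pn] path.path_abs[OF pn] by blast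
qed

lemma anc: assumes "(a,b) \<in> (childrel G)\<^sup>+" shows "\<exists>d. d \<noteq> [] \<and> path G b d a"
  using assms
proof (induction rule: trancl_induct)
  case (base y)
  then obtain e where "path G y [e] a" using child_path[OF base] by blast
  then show ?case by blast
next
  case (step y z)
  then obtain d where d: "d \<noteq> []" "path G y d a" by blast
  obtain e where e: "path G z [e] y" using child_path[OF step.hyps(2)] by blast
  have "path G z (d @ [e]) a" by (rule path_cat[OF d(2) e])
  then show ?case using d(1) by blast
qed

lemma lg_pre: "lambda_graph G \<Longrightarrow> pre_lambda_graph G"
  unfolding lambda_graph_def by blast

lemma wf_child: assumes "lambda_graph G" shows "wf ((childrel G)\<^sup>+)"
proof -
  have pl: "pre_lambda_graph G" using assms lg_pre by blast
  have sub: "childrel G \<subseteq> nodes G \<times> nodes G"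
  proof (rule subrelI)
    fix c p assume "(c,p) \<in> childrel G"
    then have p: "p \<in> nodes G" and "(\<exists>c2. lab G p = App c c2) \<or> (\<exists>c1. lab G p = App c1 c) \<or> lab G p = Abs c"
      unfolding childrel_def by auto
    then have "c \<in> nodes G" using pl_app[OF pl p] pl_abs[OF pl p] by blast
    then show "(c,p) \<in> nodes G \<times> nodes G" using p by blast
  qed
  have fin: "finite (nodes G)" using assms unfolding lambda_graph_def by blast
  have f: "finite (childrel G)" by (rule finite_subset[OF sub finite_cartesian_product[OF fin fin]])
  have noc: "\<forall>n \<tau>. path G n \<tau> n \<longrightarrow> \<tau> = []" using assms unfolding lambda_graph_def by blast
  have "acyclic (childrel G)"
  proof (rule acyclicI, intro allI notI)
    fix x assume "(x,x) \<in> (childrel G)\<^sup>+"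
    from anc[OF this] obtain d where d: "d \<noteq> []" "path G x d x" by blast
    show False using noc d by blast
  qed
  then show ?thesis using f by (simp add: finite_acyclic_wf wf_trancl)
qed

lemma hom_app: "homogeneous G R \<Longrightarrow> (x,y) \<in> R \<Longrightarrow> lab G x = App x1 x2 \<Longrightarrow> \<exists>y1 y2. lab G y = App y1 y2"
  unfolding homogeneous_def by (cases "lab G y") auto
lemma hom_abs: "homogeneous G R \<Longrightarrow> (x,y) \<in> R \<Longrightarrow> lab G x = Abs x1 \<Longrightarrow> \<exists>y1. lab G y = Abs y1"
  unfolding homogeneous_def by (cases "lab G y") auto
lemma hom_bvar: "homogeneous G R \<Longrightarrow> (x,y) \<in> R \<Longrightarrow> lab G x = BVar x1 \<Longrightarrow> \<exists>y1. lab G y = BVar y1"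
  unfolding homogeneous_def by (cases "lab G y") auto

lemma sim: assumes "homogeneous G R" "propagated G R"
  shows "path G x s x' \<Longrightarrow> (x,y) \<in> R \<Longrightarrow> y \<in> nodes G \<Longrightarrow> \<exists>y'. path G y s y' \<and> (x',y') \<in> R"
proof (induction rule: path.induct)
  case (path_nil n) then show ?case by (auto intro: path.intros)
next
  case (path_abs n \<tau> l m)
  then obtain y1 where y1: "path G y \<tau> y1" "(l,y1) \<in> R" by blast
  then obtain b where b: "lab G y1 = Abs b" using hom_abs[OF assms(1)] path_abs.hyps(2) by blast
  have "(m,b) \<in> R" using assms(2) y1 b path_abs.hyps(2) unfolding propagated_def by blast
  then show ?case using y1 b by (auto intro: path.intros)
next
  case (path_appl n \<tau> l m1 m2)
  then obtain y1 where y1: "path G y \<tau> y1" "(l,y1) \<in> R" by blast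
  then obtain b1 b2 where b: "lab G y1 = App b1 b2" using hom_app[OF assms(1)] path_appl.hyps(2) by blast
  have "(m1,b1) \<in> R" using assms(2) y1 b path_appl.hyps(2) unfolding propagated_def by blast
  then show ?case using y1 b by (auto intro: path.intros)
next
  case (path_appr n \<tau> l m1 m2)
  then obtain y1 where y1: "path G y \<tau> y1" "(l,y1) \<in> R" by blast
  then obtain b1 b2 where b: "lab G y1 = App b1 b2" using hom_app[OF assms(1)] path_appr.hyps(2) by blast
  have "(m2,b2) \<in> R" using assms(2) y1 b path_appr.hyps(2) unfolding propagated_def by blast
  then show ?case using y1 b by (auto intro: path.intros)
qed

lemma nodesc: assumes "lambda_graph G" "homogeneous G R" "propagated G R"
  shows "path G x d y \<Longrightarrow> d \<noteq> [] \<Longrightarrow> (x,y) \<notin> R"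
proof (induction x arbitrary: d y rule: wf_induct_rule[OF wf_child[OF assms(1)]])
  case (1 x)
  show ?case
  proof
    assume xy: "(x,y) \<in> R"
    have pl: "pre_lambda_graph G" using assms(1) lg_pre by blast
    have yn: "y \<in> nodes G" using path_nodes[OF pl "1.prems"(1)] by blast
    obtain z where z: "path G y d z" "(y,z) \<in> R" using sim[OF assms(2,3) "1.prems"(1) xy yn] by blast
    have "(y,x) \<in> (childrel G)\<^sup>+" using desc[OF pl "1.prems"] .
    then show False using "1.IH" z "1.prems"(2) by blast
  qed
qed



definition S0 :: "('n, 'a) pregraph \<Rightarrow> ('n \<times> 'n) set \<Rightarrow> ('n \<times> 'n) set" where
  "S0 G Q = {(n,m). \<exists>r s t. (r,s) \<in> Q \<and> path G r t n \<and> path G s t m} \<union> Id_on (nodes G)"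

lemma spread_sub:
  assumes "propagated G R" "refl_on (nodes G) R" "sym R" "trans R" "Q \<subseteq> R"
  shows "spread G Q \<subseteq> R"
proof (rule subrelI)
  fix a b assume "(a,b) \<in> spread G Q"
  then show "(a,b) \<in> R"
  proof (induction rule: spread.induct)
    case (sp_base n m) then show ?case using assms(5) by blast
  next
    case (sp_refl n) then show ?case using assms(2) by (simp add: refl_on_def)
  next
    case (sp_sym n m) then show ?case using assms(3) by (meson symD)
  next
    case (sp_trans n m k) then show ?case using assms(4) by (meson transD)
  next
    case (sp_left n m n1 n2 m1 m2) then show ?case using assms(1) unfolding propagated_def by blast
  next
    case (sp_right n m n1 n2 m1 m2) then show ?case using assms(1) unfolding propagated_def by blast
  next
    case (sp_down n m n' m') then show ?case using assms(1) unfolding propagated_def by blast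
  qed
qed

lemma inv_DD: "path G s (DD # t) m \<Longrightarrow> \<exists>l'. path G s t l' \<and> lab G l' = Abs m"
  by (cases rule: path.cases) auto
lemma inv_DL: "path G s (DL # t) m \<Longrightarrow> \<exists>l' x. path G s t l' \<and> lab G l' = App m x"
  by (cases rule: path.cases) auto
lemma inv_DR: "path G s (DR # t) m \<Longrightarrow> \<exists>l' x. path G s t l' \<and> lab G l' = App x m"
  by (cases rule: path.cases) auto

lemma S0_path_spread:
  "path G r t n \<Longrightarrow> (r,s) \<in> Q \<Longrightarrow> path G s t m \<Longrightarrow> (n,m) \<in> spread G Q"
proof (induction arbitrary: m rule: path.induct)
  case path_nil
  then have "m = s" using path_nil_eq by metis
  then show ?case using path_nil.prems(1) by (simp add: spread.sp_base)
next
  case (path_abs n \<tau> l m' m)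
  obtain l' where l': "path G s \<tau> l'" "lab G l' = Abs m" using inv_DD[OF path_abs.prems(2)] by blast
  have "(l,l') \<in> spread G Q" using path_abs.IH path_abs.prems(1) l'(1) by simp
  then show ?case using \<open>lab G l = Abs m'\<close> l'(2) by (rule spread.sp_down)
next
  case (path_appl n \<tau> l m1 m2 m)
  obtain l' x where l': "path G s \<tau> l'" "lab G l' = App m x" using inv_DL[OF path_appl.prems(2)] by blast
  have "(l,l') \<in> spread G Q" using path_appl.IH path_appl.prems(1) l'(1) by simp
  then show ?case using \<open>lab G l = App m1 m2\<close> l'(2) by (rule spread.sp_left)
next
  case (path_appr n \<tau> l m1 m2 m)
  obtain l' x where l': "path G s \<tau> l'" "lab G l' = App x m" using inv_DR[OF path_appr.prems(2)] by blast
  have "(l,l') \<in> spread G Q" using path_appr.IH path_appr.prems(1) l'(1) by simp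
  then show ?case using \<open>lab G l = App m1 m2\<close> l'(2) by (rule spread.sp_right)
qed

lemma S0_spread: "S0 G Q \<subseteq> spread G Q"
  unfolding S0_def using S0_path_spread by (fastforce intro: spread.sp_refl)

lemma S0_app: assumes "pre_lambda_graph G" "(y,z) \<in> S0 G Q" "lab G y = App y1 y2" "lab G z = App z1 z2"
  shows "(y1,z1) \<in> S0 G Q \<and> (y2,z2) \<in> S0 G Q"
proof -
  have "(y,z) \<in> {(n,m). \<exists>r s t. (r,s) \<in> Q \<and> path G r t n \<and> path G s t m} \<or> (y,z) \<in> Id_on (nodes G)"
    using assms(2) unfolding S0_def by blast
  then show ?thesis
  proof
  assume "(y,z) \<in> {(n,m). \<exists>r s t. (r,s) \<in> Q \<and> path G r t n \<and> path G s t m}"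
  then obtain r s t where rs: "(r,s) \<in> Q" "path G r t y" "path G s t z" by blast
  have a: "path G r (DL # t) y1" "path G s (DL # t) z1" "path G r (DR # t) y2" "path G s (DR # t) z2"
    by (rule path.path_appl[OF rs(2) assms(3)], rule path.path_appl[OF rs(3) assms(4)],
      rule path.path_appr[OF rs(2) assms(3)], rule path.path_appr[OF rs(3) assms(4)])
  have "(y1,z1) \<in> {(n,m). \<exists>r s t. (r,s) \<in> Q \<and> path G r t n \<and> path G s t m}"
    using rs(1) a(1,2) by blast
  moreover have "(y2,z2) \<in> {(n,m). \<exists>r s t. (r,s) \<in> Q \<and> path G r t n \<and> path G s t m}"
    using rs(1) a(3,4) by blast
  ultimately show ?thesis unfolding S0_def by blast
next
  assume "(y,z) \<in> Id_on (nodes G)"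
  then have yz: "y = z" "y \<in> nodes G" by auto
  then have "y1 = z1" "y2 = z2" using assms(3,4) by simp_all
  moreover have "y1 \<in> nodes G" "y2 \<in> nodes G" using pl_app[OF assms(1) yz(2) assms(3)] by simp_all
  ultimately show ?thesis unfolding S0_def by (simp add: Id_on_iff)
qed
qed

lemma S0_abs: assumes "pre_lambda_graph G" "(y,z) \<in> S0 G Q" "lab G y = Abs y1" "lab G z = Abs z1"
  shows "(y1,z1) \<in> S0 G Q"
proof -
  have "(y,z) \<in> {(n,m). \<exists>r s t. (r,s) \<in> Q \<and> path G r t n \<and> path G s t m} \<or> (y,z) \<in> Id_on (nodes G)"
    using assms(2) unfolding S0_def by blast
  then show ?thesis
  proof
  assume "(y,z) \<in> {(n,m). \<exists>r s t. (r,s) \<in> Q \<and> path G r t n \<and> path G s t m}"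
  then obtain r s t where rs: "(r,s) \<in> Q" "path G r t y" "path G s t z" by blast
  have a: "path G r (DD # t) y1" "path G s (DD # t) z1"
    by (rule path.path_abs[OF rs(2) assms(3)], rule path.path_abs[OF rs(3) assms(4)])
  have "(y1,z1) \<in> {(n,m). \<exists>r s t. (r,s) \<in> Q \<and> path G r t n \<and> path G s t m}"
    using rs(1) a by blast
  then show ?thesis unfolding S0_def by blast
next
  assume "(y,z) \<in> Id_on (nodes G)"
  then have yz: "y = z" "y \<in> nodes G" by auto
  then have "y1 = z1" using assms(3,4) by simp_all
  moreover have "y1 \<in> nodes G" using pl_abs[OF assms(1) yz(2) assms(3)] by simp_all
  ultimately show ?thesis unfolding S0_def by (simp add: Id_on_iff)
qed
qed

definition TT :: "('n, 'a) pregraph \<Rightarrow> ('n \<times> 'n) set \<Rightarrow> ('n \<times> 'n) set" where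
  "TT G Q = (S0 G Q \<union> (S0 G Q)\<inverse>)\<^sup>*"

lemma TT_sym: "(x,y) \<in> TT G Q \<Longrightarrow> (y,x) \<in> TT G Q"
  unfolding TT_def
proof (induction rule: rtrancl_induct)
  case base then show ?case by simp
next
  case (step y z) then show ?case by (meson converse_rtrancl_into_rtrancl converse_iff Un_iff)
qed

lemma hom_app': "homogeneous G R \<Longrightarrow> (y,x) \<in> R \<Longrightarrow> lab G x = App x1 x2 \<Longrightarrow> \<exists>y1 y2. lab G y = App y1 y2"
  unfolding homogeneous_def by (cases "lab G y") auto
lemma hom_abs': "homogeneous G R \<Longrightarrow> (y,x) \<in> R \<Longrightarrow> lab G x = Abs x1 \<Longrightarrow> \<exists>y1. lab G y = Abs y1"
  unfolding homogeneous_def by (cases "lab G y") auto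
lemma hom_bvar': "homogeneous G R \<Longrightarrow> (y,x) \<in> R \<Longrightarrow> lab G x = BVar x1 \<Longrightarrow> \<exists>y1. lab G y = BVar y1"
  unfolding homogeneous_def by (cases "lab G y") auto

lemma TT_app: assumes "pre_lambda_graph G" "S0 G Q \<subseteq> R" "homogeneous G R"
  shows "(x,y) \<in> TT G Q \<Longrightarrow> lab G x = App x1 x2 \<Longrightarrow>
     \<exists>y1 y2. lab G y = App y1 y2 \<and> (x1,y1) \<in> TT G Q \<and> (x2,y2) \<in> TT G Q"
  unfolding TT_def
proof (induction rule: rtrancl_induct)
  case base then show ?case by auto
next
  case (step y z)
  then obtain y1 y2 where y: "lab G y = App y1 y2" "(x1,y1) \<in> (S0 G Q \<union> (S0 G Q)\<inverse>)\<^sup>*"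
      "(x2,y2) \<in> (S0 G Q \<union> (S0 G Q)\<inverse>)\<^sup>*" by blast
  from step.hyps(2) show ?case
  proof
    assume yz: "(y,z) \<in> S0 G Q"
    then obtain z1 z2 where z: "lab G z = App z1 z2" using hom_app[OF assms(3)] assms(2) y(1) by blast
    have "(y1,z1) \<in> S0 G Q \<and> (y2,z2) \<in> S0 G Q" using S0_app[OF assms(1) yz y(1) z] .
    then show ?thesis using y z by (meson UnI1 rtrancl.rtrancl_into_rtrancl)
  next
    assume "(y,z) \<in> (S0 G Q)\<inverse>"
    then have zy: "(z,y) \<in> S0 G Q" by simp
    then obtain z1 z2 where z: "lab G z = App z1 z2" using hom_app'[OF assms(3)] assms(2) y(1) by blast
    have "(z1,y1) \<in> S0 G Q \<and> (z2,y2) \<in> S0 G Q" using S0_app[OF assms(1) zy z y(1)] .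
    then show ?thesis using y z by (meson UnI2 converse_iff rtrancl.rtrancl_into_rtrancl)
  qed
qed

lemma TT_abs: assumes "pre_lambda_graph G" "S0 G Q \<subseteq> R" "homogeneous G R"
  shows "(x,y) \<in> TT G Q \<Longrightarrow> lab G x = Abs x1 \<Longrightarrow>
     \<exists>y1. lab G y = Abs y1 \<and> (x1,y1) \<in> TT G Q"
  unfolding TT_def
proof (induction rule: rtrancl_induct)
  case base then show ?case by auto
next
  case (step y z)
  then obtain y1 where y: "lab G y = Abs y1" "(x1,y1) \<in> (S0 G Q \<union> (S0 G Q)\<inverse>)\<^sup>*" by blast
  from step.hyps(2) show ?case
  proof
    assume yz: "(y,z) \<in> S0 G Q"
    then obtain z1 where z: "lab G z = Abs z1" using hom_abs[OF assms(3)] assms(2) y(1) by blast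
    have "(y1,z1) \<in> S0 G Q" using S0_abs[OF assms(1) yz y(1) z] .
    then show ?thesis using y z by (meson UnI1 rtrancl.rtrancl_into_rtrancl)
  next
    assume "(y,z) \<in> (S0 G Q)\<inverse>"
    then have zy: "(z,y) \<in> S0 G Q" by simp
    then obtain z1 where z: "lab G z = Abs z1" using hom_abs'[OF assms(3)] assms(2) y(1) by blast
    have "(z1,y1) \<in> S0 G Q" using S0_abs[OF assms(1) zy z y(1)] .
    then show ?thesis using y z by (meson UnI2 converse_iff rtrancl.rtrancl_into_rtrancl)
  qed
qed



lemma crosses_split: "crosses G r t l \<Longrightarrow> \<exists>t1 t2. t = t1 @ t2 \<and> path G r t2 l"
proof (induction t)
  case Nil then show ?case by simp
next
  case (Cons d t)
  then have "path G r (d # t) l \<or> crosses G r t l" by simp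
  then show ?case
  proof
    assume "path G r (d # t) l" then show ?thesis by (metis append_Nil)
  next
    assume "crosses G r t l"
    then obtain t1 t2 where "t = t1 @ t2" "path G r t2 l" using Cons.IH by blast
    then show ?thesis by (metis append_Cons)
  qed
qed

lemma suffix_cases: "(t1::'x list) @ t2 = t1' @ t2' \<Longrightarrow> length t2 \<le> length t2' \<Longrightarrow> \<exists>d. t2' = d @ t2"
proof -
  assume e: "t1 @ t2 = t1' @ t2'" and le: "length t2 \<le> length t2'"
  obtain us where "(t1 = t1' @ us \<and> us @ t2 = t2') \<or> (t1 @ us = t1' \<and> t2 = us @ t2')"
    using e append_eq_append_conv2[of t1 t2 t1' t2'] by blast
  then show ?thesis
  proof
    assume "t1 = t1' @ us \<and> us @ t2 = t2'" then show ?thesis by blast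
  next
    assume a: "t1 @ us = t1' \<and> t2 = us @ t2'"
    then have "length t2 = length us + length t2'" by simp
    then have "us = []" using le by simp
    then have "t2' = [] @ t2" using a by simp
    then show ?thesis by blast
  qed
qed

locale setting =
  fixes G :: "('n, 'a) pregraph" and Q R :: "('n \<times> 'n) set"
  assumes lg: "lambda_graph G" and qu: "query G Q" and se: "sharing_equivalence G R" and QR: "Q \<subseteq> R"
begin

lemma pl: "pre_lambda_graph G" using lg lg_pre by blast
lemma hom: "homogeneous G R" using se unfolding sharing_equivalence_def bisimulation_def by blast
lemma prp: "propagated G R" using se unfolding sharing_equivalence_def bisimulation_def by blast
lemma cb: "closed_binders G R" using se unfolding sharing_equivalence_def bisimulation_def by blast
lemma eqv: "equiv (nodes G) R" using se unfolding sharing_equivalence_def by blast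
lemma opn: "open_rel G R" using se unfolding sharing_equivalence_def by blast
lemma Rsym: "(x,y) \<in> R \<Longrightarrow> (y,x) \<in> R" using eqv unfolding equiv_def by (meson symD)
lemma Rtrans: "(x,y) \<in> R \<Longrightarrow> (y,z) \<in> R \<Longrightarrow> (x,z) \<in> R" using eqv unfolding equiv_def by (meson transD)
lemma spR: "spread G Q \<subseteq> R" using spread_sub[OF prp _ _ _ QR] eqv unfolding equiv_def by blast
lemma S0R: "S0 G Q \<subseteq> R" using spR S0_spread by blast
lemma roots: "(r,s) \<in> Q \<Longrightarrow> is_root G r \<and> is_root G s" using qu unfolding query_def by blast

lemma core_le:
  assumes rs: "(r,s) \<in> Q \<or> (s,r) \<in> Q"
    and pn: "path G r t n" and pm: "path G s t m"
    and ln: "lab G n = BVar l" and lm: "lab G m = BVar l'"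
    and t: "t = t1 @ t2" "t = t1' @ t2'" and pl2: "path G r t2 l" and pl2': "path G s t2' l'"
    and le: "length t2 \<le> length t2'"
  shows "(l,l') \<in> spread G Q"
proof -
  have rsR: "(r,s) \<in> R" using rs QR Rsym by blast
  have sn: "s \<in> nodes G" using rs roots unfolding is_root_def by blast
  obtain d where d: "t2' = d @ t2" using suffix_cases t le by metis
  show ?thesis
  proof (cases "d = []")
    case True
    then have "path G s t2 l'" using pl2' d by simp
    then show ?thesis using rs pl2 S0_path_spread spread.sp_sym by metis
  next
    case False
    obtain p where p: "path G r t2' p" "path G p t1' n" using path_split[OF pl] pn t(2) by metis
    obtain q where q: "path G r t2 q" "path G q d p" using path_split[OF pl] p(1) d by metis
    have "q = l" using q(1) pl2 path_det by metis
    then have lp: "path G l d p" using q(2) by simp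
    obtain p' where p': "path G s t2' p'" "(p,p') \<in> R" using sim[OF hom prp p(1) rsR sn] by blast
    have "p' = l'" using p'(1) pl2' path_det by metis
    then have pl': "(p,l') \<in> R" using p' by simp
    obtain m' where m': "path G s t m'" "(n,m') \<in> R" using sim[OF hom prp pn rsR sn] by blast
    have "m' = m" using m'(1) pm path_det by metis
    then have "(n,m) \<in> R" using m' by simp
    then have "(l,l') \<in> R" using cb ln lm unfolding closed_binders_def by blast
    then have "(l,p) \<in> R" using pl' Rsym Rtrans by blast
    then show ?thesis using nodesc[OF lg hom prp lp False] by blast
  qed
qed

lemma core:
  assumes rs: "(r,s) \<in> Q" and pn: "path G r t n" and pm: "path G s t m"
    and ln: "lab G n = BVar l" and lm: "lab G m = BVar l'"
  shows "(l,l') \<in> spread G Q"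
proof -
  have nn: "n \<in> nodes G" "m \<in> nodes G" using path_nodes[OF pl pn] path_nodes[OF pl pm] by blast+
  have dom: "\<forall>n\<in>nodes G. \<forall>l. lab G n = BVar l \<longrightarrow> dominates G l n" using lg unfolding lambda_graph_def by blast
  have "dominates G l n" using dom nn(1) ln by blast
  then have "crosses G r t l" using roots[OF rs] pn unfolding dominates_def by blast
  from crosses_split[OF this] obtain t1 t2 where t: "t = t1 @ t2" "path G r t2 l" by blast
  have "dominates G l' m" using dom nn(2) lm by blast
  then have "crosses G s t l'" using roots[OF rs] pm unfolding dominates_def by blast
  from crosses_split[OF this] obtain t1' t2' where t': "t = t1' @ t2'" "path G s t2' l'" by blast
  show ?thesis
  proof (cases "length t2 \<le> length t2'")
    case True
    then show ?thesis using core_le[OF _ pn pm ln lm t(1) t'(1) t(2) t'(2)] rs by blast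
  next
    case False
    then have "(l',l) \<in> spread G Q" using core_le[OF _ pm pn lm ln t'(1) t(1) t'(2) t(2)] rs by simp
    then show ?thesis by (rule spread.sp_sym)
  qed
qed

lemma S0_bvar: assumes "(y,z) \<in> S0 G Q" "lab G y = BVar l1" "lab G z = BVar l2"
  shows "(l1,l2) \<in> spread G Q"
proof -
  have "(\<exists>r s t. (r,s) \<in> Q \<and> path G r t y \<and> path G s t z) \<or> (y = z \<and> y \<in> nodes G)"
    using assms(1) unfolding S0_def by auto
  then show ?thesis
  proof
    assume "\<exists>r s t. (r,s) \<in> Q \<and> path G r t y \<and> path G s t z"
    then obtain r s t where rs: "(r,s) \<in> Q" "path G r t y" "path G s t z" by blast
    show ?thesis by (rule core[OF rs assms(2,3)])
  next
    assume a: "y = z \<and> y \<in> nodes G"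
    then have "l1 = l2" using assms(2,3) by simp
    moreover have "l1 \<in> nodes G" using pl_bvar[OF pl _ assms(2)] a by blast
    ultimately show ?thesis by (simp add: spread.sp_refl)
  qed
qed

lemma TT_bvar: "(x,y) \<in> TT G Q \<Longrightarrow> x \<in> nodes G \<Longrightarrow> lab G x = BVar l \<Longrightarrow>
     \<exists>l'. lab G y = BVar l' \<and> (l,l') \<in> spread G Q"
  unfolding TT_def
proof (induction rule: rtrancl_induct)
  case base
  then have "l \<in> nodes G" using pl_bvar[OF pl] by blast
  then show ?case using base(2) by (simp add: spread.sp_refl)
next
  case (step y z)
  then obtain l1 where y: "lab G y = BVar l1" "(l,l1) \<in> spread G Q" by blast
  have "(y,z) \<in> S0 G Q \<or> (z,y) \<in> S0 G Q" using step.hyps(2) by blast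
  then have yzR: "(y,z) \<in> R \<or> (z,y) \<in> R" using S0R by blast
  then obtain l2 where z: "lab G z = BVar l2" using hom_bvar[OF hom] hom_bvar'[OF hom] y(1) by blast
  have "(l1,l2) \<in> spread G Q"
    using \<open>(y,z) \<in> S0 G Q \<or> (z,y) \<in> S0 G Q\<close>
  proof
    assume "(y,z) \<in> S0 G Q"
    then show ?thesis using S0_bvar y(1) z by blast
  next
    assume "(z,y) \<in> S0 G Q"
    then have "(l2,l1) \<in> spread G Q" using S0_bvar y(1) z by blast
    then show ?thesis by (rule spread.sp_sym)
  qed
  then have "(l,l2) \<in> spread G Q" by (rule spread.sp_trans[OF y(2)])
  then show ?case using z by blast
qed

lemma spread_TT: "(a,b) \<in> spread G Q \<Longrightarrow> (a,b) \<in> TT G Q"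
proof (induction rule: spread.induct)
  case (sp_base n m)
  then have "n \<in> nodes G" "m \<in> nodes G" using roots unfolding is_root_def by blast+
  then have "path G n [] n" "path G m [] m" by (simp_all add: path.path_nil)
  then have "(n,m) \<in> S0 G Q" using sp_base unfolding S0_def by blast
  then show ?case unfolding TT_def by blast
next
  case (sp_refl n) then show ?case unfolding TT_def by blast
next
  case (sp_sym n m) show ?case by (rule TT_sym[OF sp_sym.IH])
next
  case (sp_trans n m k) show ?case using sp_trans.IH unfolding TT_def by (rule rtrancl_trans)
next
  case (sp_left n m n1 n2 m1 m2)
  obtain y1 y2 where "lab G m = App y1 y2" "(n1,y1) \<in> TT G Q"
    using TT_app[OF pl S0R hom sp_left.IH sp_left.hyps(2)] by blast
  then show ?case using sp_left.hyps(3) by simp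
next
  case (sp_right n m n1 n2 m1 m2)
  obtain y1 y2 where "lab G m = App y1 y2" "(n2,y2) \<in> TT G Q"
    using TT_app[OF pl S0R hom sp_right.IH sp_right.hyps(2)] by blast
  then show ?case using sp_right.hyps(3) by simp
next
  case (sp_down n m n' m')
  obtain y1 where "lab G m = Abs y1" "(n',y1) \<in> TT G Q"
    using TT_abs[OF pl S0R hom sp_down.IH sp_down.hyps(2)] by blast
  then show ?case using sp_down.hyps(3) by simp
qed

lemma result: "sharing_equivalence G (spread G Q)"
proof -
  have sub: "spread G Q \<subseteq> nodes G \<times> nodes G" using spR eqv unfolding equiv_def by blast
  have o: "open_rel G (spread G Q)" using opn spR unfolding open_rel_def by blast
  have h: "homogeneous G (spread G Q)" using hom spR unfolding homogeneous_def by blast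
  have p: "propagated G (spread G Q)" unfolding propagated_def
    by (blast intro: spread.sp_left spread.sp_right spread.sp_down)
  have c: "closed_binders G (spread G Q)" unfolding closed_binders_def
  proof (intro allI impI)
    fix n m l l' assume a: "(n, m) \<in> spread G Q \<and> lab G n = BVar l \<and> lab G m = BVar l'"
    then have "(n,m) \<in> TT G Q" "n \<in> nodes G" using spread_TT sub by blast+
    then show "(l,l') \<in> spread G Q" using TT_bvar a by fastforce
  qed
  have e: "equiv (nodes G) (spread G Q)"
  proof (rule equivI[OF sub])
    show "refl_on (nodes G) (spread G Q)" unfolding refl_on_def by (blast intro: spread.sp_refl)
    show "sym (spread G Q)" unfolding sym_def by (blast intro: spread.sp_sym)
    show "trans (spread G Q)" unfolding trans_def by (blast intro: spread.sp_trans)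
  qed
  show ?thesis using o h p c e unfolding sharing_equivalence_def bisimulation_def by blast
qed

end

theorem mainTheorem16:
  fixes G :: "('n, 'a) pregraph" and Q :: "('n \<times> 'n) set"
  assumes "lambda_graph G" and "query G Q"
  shows "sharing_equivalence G (spread G Q) \<longleftrightarrow>
         (\<exists>R. sharing_equivalence G R \<and> Q \<subseteq> R)"
proof
  assume "sharing_equivalence G (spread G Q)"
  moreover have "Q \<subseteq> spread G Q" by (rule subrelI, rule spread.sp_base)
  ultimately show "\<exists>R. sharing_equivalence G R \<and> Q \<subseteq> R" by blast
next
  assume "\<exists>R. sharing_equivalence G R \<and> Q \<subseteq> R"
  then obtain R where "sharing_equivalence G R" "Q \<subseteq> R" by blast
  then interpret setting G Q R using assms by unfold_locales
  show "sharing_equivalence G (spread G Q)" by (rule result)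
qed


end
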